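(* Let $N=q_1^{n_1}q_2^{n_2}\cdots q_r^{n_r}$ with primes $q_1<\dots<q_r$ and positive integers $n_i$, and let $\mathbf{s}$ be a Zadoff–Chu sequence of length $N$. Suppose that for some $1\le i\le r$ and integers $a,b$ the polynomial $\pi(x)=x^{q_i}+ax+b\in\mathbb{Z}_N[x]$ permutes $\mathbb{Z}_N$. Then the periodic auto-correlation $\theta(d)$ of the interleaved sequence $\mathbf{s}\circ\pi$ satisfies $\theta(d)=0$ for every $0<d<N$ with $q_i^{n_i}\nmid d$.
   Context: $\xi_N=e^{-2\pi\sqrt{-1}/N}$, $\xi_N^{x/2}=e^{-\pi\sqrt{-1}x/N}$. A Zadoff–Chu sequence of length $N$ is $s(k)=\xi_N^{u(k^2+(N\bmod2)k+2lk)/2}$, $0\le k<N$, with $\gcd(u,N)=1$ and $l$ an integer. $(\mathbf{s}\circ\pi)(k)=s(\pi(k)\bmod N)$. The periodic auto-correlation of a length-$N$ sequence $\mathbf{y}$ is $\theta(d)=\sum_{k=0}^{N-1}y(k)y^*(k+d)$, indices mod $N$. *)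

theory Defs
  imports Complex_Main "HOL-Computational_Algebra.Primes"
begin

text \<open>Zadoff-Chu sequence of length N with parameters u, l:
  s(k) = xi_N^(u(k^2 + (N mod 2)k + 2lk)/2) = exp(-pi i u(k^2+(N mod 2)k+2lk)/N).\<close>
definition zc :: "nat \<Rightarrow> int \<Rightarrow> int \<Rightarrow> int \<Rightarrow> complex" where
  "zc N u l k = cis (- pi * real_of_int (u * (k^2 + int (N mod 2) * k + 2 * l * k)) / real N)"

definition permutes_ZN :: "nat \<Rightarrow> (int \<Rightarrow> int) \<Rightarrow> bool" where
  "permutes_ZN N f \<longleftrightarrow> bij_betw (\<lambda>k. f k mod int N) {0..<int N} {0..<int N}"

definition autocorr :: "nat \<Rightarrow> (int \<Rightarrow> complex) \<Rightarrow> int \<Rightarrow> complex" where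
  "autocorr N y d = (\<Sum>k\<in>{0..<int N}. y k * cnj (y ((k + d) mod int N)))"

end

theory Submission
  imports Defs
begin

lemma pow_diff_dvd: "(x - y) dvd (x ^ n - y ^ (n::nat) :: int)"
  by (metis dvd_triv_left power_diff_sumr2)

lemma binomB:
  fixes k t :: int assumes q: "prime q"
  shows "int q * t dvd ((k + t) ^ q - k ^ q - t ^ q)"
proof -
  have q2: "q \<ge> 2" using q prime_ge_2_nat by blast
  then obtain r where r: "q = Suc (Suc r)" by (metis add_2_eq_Suc le_Suc_ex)
  define f where "f i = of_nat (q choose i) * t ^ i * k ^ (q - i)" for i
  have "(t + k) ^ q = (\<Sum>i\<le>q. f i)" unfolding f_def by (rule binomial_ring)
  also have "\<dots> = f 0 + (\<Sum>i\<le>Suc r. f (Suc i))" unfolding r by (rule sum.atMost_Suc_shift)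
  also have "\<dots> = f 0 + (\<Sum>i\<le>r. f (Suc i)) + f q" by (simp add: r)
  finally have e: "(k + t) ^ q - k ^ q - t ^ q = (\<Sum>i\<le>r. f (Suc i))"
    by (simp add: f_def add.commute)
  have "int q * t dvd f (Suc i)" if "i \<le> r" for i
  proof -
    have "q dvd (q choose Suc i)" using dvd_choose_prime[of "Suc i" q] q that r by simp
    hence "int q dvd of_nat (q choose Suc i)" by (metis of_nat_dvd_iff)
    thus ?thesis unfolding f_def by (simp add: mult_dvd_mono mult.assoc)
  qed
  thus ?thesis unfolding e by (intro dvd_sum) auto
qed

lemma fermat_int:
  fixes x :: int assumes q: "prime q"
  shows "int q dvd x ^ q - x"
proof (induct x rule: int_induct[where k=0])
  case base
  have "q > 0" using q prime_gt_0_nat by blast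
  then show ?case by (simp add: power_0_left)
next
  case (step1 i)
  have "int q dvd (i + 1) ^ q - i ^ q - 1" using binomB[OF q, where k=i and t=1] by simp
  from dvd_add[OF this step1(2)] show ?case by (simp add: algebra_simps)
next
  case (step2 i)
  have "int q dvd i ^ q - (i - 1) ^ q - 1" using binomB[OF q, where k="i - 1" and t=1] by simp
  from dvd_diff[OF step2(2) this] show ?case by (simp add: algebra_simps)
qed

lemma binomF3:
  fixes k d T :: int assumes q: "prime q"
  shows "int q * T * d dvd ((k + d + T) ^ q - (k + d) ^ q - (k + T) ^ q + k ^ q)"
proof -
  obtain r where r: "q = Suc r" using q prime_gt_0_nat gr0_implies_Suc by blast
  define f where "f i = of_nat (q choose i) * T ^ i * ((k + d) ^ (q - i) - k ^ (q - i))" for i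
  have "(T + (k + d)) ^ q - (T + k) ^ q = (\<Sum>i\<le>q. f i)"
    unfolding f_def binomial_ring by (simp add: sum_subtractf[symmetric] algebra_simps)
  also have "\<dots> = f 0 + (\<Sum>i\<le>r. f (Suc i))" unfolding r by (rule sum.atMost_Suc_shift)
  finally have e: "(k + d + T) ^ q - (k + d) ^ q - (k + T) ^ q + k ^ q = (\<Sum>i\<le>r. f (Suc i))"
    by (simp add: f_def add.commute add.left_commute)
  have "int q * T * d dvd f (Suc i)" if "i \<le> r" for i
  proof (cases "i = r")
    case True then show ?thesis by (simp add: f_def r)
  next
    case False
    have "q dvd (q choose Suc i)" using dvd_choose_prime[of "Suc i" q] q that r False by simp
    hence "int q dvd of_nat (q choose Suc i)" by (metis of_nat_dvd_iff)
    moreover have "d dvd ((k + d) ^ (q - Suc i) - k ^ (q - Suc i))" using pow_diff_dvd[of "k+d" k] by simp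
    ultimately show ?thesis unfolding f_def by (simp add: mult_dvd_mono)
  qed
  thus ?thesis unfolding e by (intro dvd_sum) auto
qed

lemma poly_cong:
  fixes x y a b :: int
  assumes "n dvd x - y"
  shows "n dvd (x ^ q + a * x + b) - (y ^ q + a * y + b)"
proof -
  have "n dvd x ^ q - y ^ q" using assms pow_diff_dvd dvd_trans by blast
  moreover have "n dvd a * (x - y)" using assms by simp
  ultimately have "n dvd (x ^ q - y ^ q) + a * (x - y)" by (rule dvd_add)
  thus ?thesis by (simp add: algebra_simps)
qed

lemma parity_aux: "even (z * (int N * z + int (N mod 2)))"
  by (cases "even N"; cases "even z") (auto simp: odd_iff_mod_2_eq_one[symmetric])

lemma E_cong:
  fixes x y u l :: int
  assumes "int N dvd x - y"
  shows "2 * int N dvd u*(x^2 + int(N mod 2)*x + 2*l*x) - u*(y^2 + int(N mod 2)*y + 2*l*y)"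
proof -
  obtain z where z: "x = y + int N * z" using assms by (metis dvd_def add_diff_cancel_left' diff_add_cancel)
  obtain w where w: "z * (int N * z + int (N mod 2)) = 2 * w" using parity_aux by blast
  have "u*(x^2 + int(N mod 2)*x + 2*l*x) - u*(y^2 + int(N mod 2)*y + 2*l*y)
      = 2 * int N * (u * z * (y + l)) + u * int N * (z * (int N * z + int (N mod 2)))"
    unfolding z by (simp add: power2_eq_square algebra_simps)
  also have "\<dots> = 2 * int N * (u * z * (y + l) + u * w)" unfolding w by (simp add: algebra_simps)
  finally show ?thesis by simp
qed

lemma cis_cong:
  fixes A B :: int
  assumes "N > 0" "2 * int N dvd A - B"
  shows "cis (- pi * real_of_int A / real N) = cis (- pi * real_of_int B / real N)"
proof -
  obtain j where j: "A = B + 2 * int N * j" using assms(2) by (metis dvd_def add_diff_cancel_left' diff_add_cancel)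
  have "- pi * real_of_int A / real N = - pi * real_of_int B / real N + 2 * pi * real_of_int (- j)"
    unfolding j using assms(1) by (simp add: field_simps)
  hence "cis (- pi * real_of_int A / real N) = cis (- pi * real_of_int B / real N) * cis (2 * pi * real_of_int (- j))"
    by (simp add: cis_mult)
  also have "cis (2 * pi * real_of_int (- j)) = 1" by (rule cis_multiple_2pi) simp
  finally show ?thesis by simp
qed
theorem proposition1:
  fixes N q :: nat and u l a b d :: int
  assumes "N > 0"
    and "prime q" and "q dvd N"
    and "coprime u (int N)"
    and "permutes_ZN N (\<lambda>x. x ^ q + a * x + b)"
    and "0 < d" and "d < int N"
    and "\<not> (int q ^ multiplicity q N) dvd d"
  shows "autocorr N (\<lambda>k. zc N u l ((k ^ q + a * k + b) mod int N)) d = 0"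
proof -
  define Q where "Q = int q"
  define NN where "NN = int N"
  define P where "P x = x ^ q + a * x + b" for x :: int
  define E where "E x = u*(x^2 + int(N mod 2)*x + 2*l*x)" for x :: int
  have q2: "q \<ge> 2" using assms(2) prime_ge_2_nat by blast
  have Q2: "Q \<ge> 2" using q2 unfolding Q_def by simp
  have primeQ: "prime Q" unfolding Q_def using assms(2) by (simp add: prime_nat_int_transfer)
  have NNpos: "NN > 0" using assms(1) NN_def by simp
  define n where "n = multiplicity q N"
  have nu: "\<not> is_unit q" using q2 by simp
  obtain M where NM: "N = q ^ n * M" and qM: "\<not> q dvd M"
    using multiplicity_decompose'[of N q] assms(1) nu n_def by auto
  have n1: "n \<ge> 1" using multiplicity_gt_zero_iff[of N q] assms(1,3) nu n_def by auto
  define Mi where "Mi = int M"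
  have NNM: "NN = Q ^ n * Mi" unfolding NN_def Q_def Mi_def NM by simp
  have QMi: "\<not> Q dvd Mi" unfolding Q_def Mi_def using qM by simp
  have Mpos: "Mi > 0" using assms(1) NM Mi_def by (cases "M = 0") auto
  have d0: "d \<noteq> 0" using assms(6) by simp
  have Qnu: "\<not> is_unit Q" using Q2 by auto
  define m where "m = multiplicity Q d"
  obtain d1 where dd: "d = Q ^ m * d1" and Qd1: "\<not> Q dvd d1"
    using multiplicity_decompose'[of d Q] d0 Qnu m_def by auto
  have mn: "m < n"
  proof (rule ccontr)
    assume "\<not> m < n"
    hence "Q ^ n dvd Q ^ m" by (simp add: le_imp_power_dvd)
    hence "Q ^ n dvd d" unfolding dd by (simp add: dvd_mult2)
    thus False using assms(8) unfolding Q_def n_def by simp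
  qed
  have QNN: "Q dvd NN" unfolding NNM using n1 by (cases n) auto
  have Qnot1: "\<not> Q dvd 1" using Q2 zdvd_imp_le[of Q 1] by auto
  have bij: "bij_betw (\<lambda>k. P k mod NN) {0..<NN} {0..<NN}"
    using assms(5) unfolding permutes_ZN_def P_def NN_def by simp
  have F4a: "\<not> Q dvd 1 + a"
  proof
    assume h: "Q dvd 1 + a"
    have "(b + 1) mod NN \<in> {0..<NN}" using NNpos by simp
    then obtain k where "P k mod NN = (b+1) mod NN"
      using bij unfolding bij_betw_def by (metis (no_types, lifting) imageE)
    hence "NN dvd P k - (b + 1)" by (simp add: mod_eq_dvd_iff)
    hence h1: "Q dvd P k - (b+1)" using QNN dvd_trans by blast
    have h2: "Q dvd k^q - k" using fermat_int assms(2) Q_def by simp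
    have h3: "Q dvd (1+a)*k" using h by simp
    have "Q dvd (k^q - k) + (1+a)*k - (P k - (b+1))" by (rule dvd_diff[OF dvd_add[OF h2 h3] h1])
    moreover have "(k^q - k) + (1+a)*k - (P k - (b+1)) = 1" by (simp add: P_def algebra_simps)
    ultimately show False using Qnot1 by simp
  qed
  have F4b: "\<not> Q dvd a" if n2: "n \<ge> 2"
  proof
    assume h: "Q dvd a"
    then obtain a' where a': "a = Q * a'" by (auto simp: dvd_def)
    define k1 where "k1 = Q ^ (n - 1) * Mi"
    have NNk1: "NN = Q * k1" unfolding k1_def NNM using n1 by (cases n) auto
    have k1pos: "k1 > 0" using Mpos Q2 k1_def by simp
    have k1lt: "k1 < NN" using NNk1 k1pos Q2 by (simp add: mult_less_cancel_right1)
    have "(n-1)+(n-1) = n + (n-2)" using n2 by simp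
    hence pw: "Q^(n-1)*Q^(n-1) = Q^n*Q^(n-2)" by (metis power_add)
    have "k1 * k1 = NN * (Q^(n-2) * Mi)" unfolding k1_def NNM
      using pw by (simp add: algebra_simps)
    hence "NN dvd k1 * k1" by simp
    moreover have "k1 ^ q = k1 * k1 * k1 ^ (q - 2)"
      using q2 by (metis add_2_eq_Suc le_add_diff_inverse power_Suc mult.assoc)
    ultimately have "NN dvd k1 ^ q" by simp
    moreover have "NN dvd a * k1" unfolding a' NNk1 by simp
    ultimately have "NN dvd k1 ^ q + a * k1" by simp
    moreover have "P k1 - P 0 = k1 ^ q + a * k1" using q2 by (simp add: P_def)
    ultimately have "P k1 mod NN = P 0 mod NN" by (simp add: mod_eq_dvd_iff)
    moreover have "inj_on (\<lambda>k. P k mod NN) {0..<NN}" using bij by (simp add: bij_betw_def)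
    moreover have "k1 \<in> {0..<NN}" using k1pos k1lt by simp
    moreover have "0 \<in> {0..<NN}" using NNpos by simp
    ultimately have "k1 = 0" by (metis (no_types, lifting) inj_onD)
    thus False using k1pos by simp
  qed
  define T where "T = Q ^ (n - m - 1) * Mi"
  have "n = Suc m + (n - m - 1)" using mn by simp
  hence "Q ^ n = Q * Q ^ m * Q ^ (n - m - 1)" by (metis power_add power_Suc)
  hence NNT: "NN = Q * Q ^ m * T" unfolding NNM T_def by (simp add: mult.assoc)
  define f where "f = (if m = 0 then 1 + a else a)"
  define e where "e = (if n - m = 1 then a + 1 else a)"
  have F1: "Q ^ (m+1) dvd P (k+d) - P k - f * d" for k
  proof -
    have b1: "Q * d dvd (k+d)^q - k^q - d^q" using binomB[OF assms(2)] Q_def by simp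
    have "Q^(m+1) dvd Q * d" unfolding dd by simp
    hence b: "Q^(m+1) dvd (k+d)^q - k^q - d^q" using b1 dvd_trans by blast
    have c: "Q^(m+1) dvd d^q + a*d - f*d"
    proof (cases "m = 0")
      case True
      then show ?thesis using fermat_int[OF assms(2), of d] unfolding f_def Q_def
        by (simp add: algebra_simps)
    next
      case False
      have "m * 2 \<le> m * q" using q2 by simp
      hence "m + 1 \<le> m * q" using False by linarith
      hence "Q^(m+1) dvd Q^(m*q)" by (rule le_imp_power_dvd)
      moreover have "d ^ q = Q^(m*q) * d1^q" unfolding dd by (simp add: power_mult_distrib power_mult)
      ultimately have "Q^(m+1) dvd d^q" by simp
      then show ?thesis using False unfolding f_def by simp
    qed
    have eq: "P (k+d) - P k - f*d = ((k+d)^q - k^q - d^q) + (d^q + a*d - f*d)"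
      by (simp add: P_def algebra_simps)
    show ?thesis unfolding eq by (rule dvd_add[OF b c])
  qed
  have F2: "Q * T dvd P (k+T) - P k - e * T" for k
  proof -
    have b: "Q*T dvd (k+T)^q - k^q - T^q" using binomB[OF assms(2)] Q_def by simp
    have c: "Q*T dvd T^q + a*T - e*T"
    proof (cases "n - m = 1")
      case True
      hence TM: "T = Mi" unfolding T_def by simp
      have "Q dvd T^q - T" using fermat_int[OF assms(2)] Q_def by simp
      moreover have "T dvd T^q - T" using q2 by simp
      moreover have "coprime Q T" using TM QMi primeQ by (simp add: prime_imp_coprime)
      ultimately have "Q * T dvd T^q - T" by (simp add: divides_mult)
      then show ?thesis using True unfolding e_def by (simp add: algebra_simps)
    next
      case False
      hence nm2: "n - m - 1 = Suc (n - m - 2)" using mn by simp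
      have "T * T = Q * T * (Q ^ (n - m - 2) * Mi)" unfolding T_def nm2 by (simp add: algebra_simps)
      hence "Q * T dvd T * T" by (metis dvd_triv_left)
      moreover have "T ^ q = T * T * T ^ (q - 2)"
        using q2 by (metis add_2_eq_Suc le_add_diff_inverse power_Suc mult.assoc)
      ultimately have "Q * T dvd T ^ q" by simp
      then show ?thesis using False unfolding e_def by simp
    qed
    have eq: "P (k+T) - P k - e*T = ((k+T)^q - k^q - T^q) + (T^q + a*T - e*T)"
      by (simp add: P_def algebra_simps)
    show ?thesis unfolding eq by (rule dvd_add[OF b c])
  qed
  have F3: "NN dvd P (k+d+T) - P (k+T) - P (k+d) + P k" for k
  proof -
    have "Q*T*d dvd (k + d + T) ^ q - (k + d) ^ q - (k + T) ^ q + k ^ q"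
      using binomF3[OF assms(2)] Q_def by simp
    moreover have "Q*T*d = NN * d1" unfolding NNT dd by simp
    moreover have "P (k+d+T) - P (k+T) - P (k+d) + P k = (k + d + T) ^ q - (k + d) ^ q - (k + T) ^ q + k ^ q"
      by (simp add: P_def algebra_simps)
    ultimately show ?thesis by (metis dvd_mult_left)
  qed
  have Econg: "2 * NN dvd E x - E y" if "NN dvd x - y" for x y
    using E_cong[of N x y u l] that unfolding E_def NN_def by simp
  have Ediff: "E z - E (z + D) = - u * D * (2*z + D + int (N mod 2) + 2*l)" for z D
    by (simp add: E_def power2_eq_square algebra_simps)
  define H where "H k = E (P k) - E (P (k + d))" for k
  define W where "W = u * f * d1 * e"
  have Hshift: "2 * NN dvd H (k + T) - (H k - 2 * (Q^m * T) * W)" for k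
  proof -
    define x where "x = P k"
    define D where "D = P (k+d) - P k"
    define Dl where "Dl = P (k+T) - P k"
    have kk: "k + T + d = k + d + T" by simp
    have e1: "2*NN dvd E (P (k+d+T)) - E (x + Dl + D)"
      using Econg F3[of k] unfolding x_def D_def Dl_def by (simp add: algebra_simps)
    have hT: "H (k+T) = E (x + Dl) - E (P (k+d+T))" unfolding H_def kk x_def Dl_def by simp
    have hk: "H k = E x - E (x + D)" unfolding H_def x_def D_def by simp
    obtain r1 where r1: "P (k+d) - P k - f * d = Q^(m+1) * r1" using F1[of k] by (auto simp: dvd_def)
    obtain r2 where r2: "P (k+T) - P k - e * T = Q * T * r2" using F2[of k] by (auto simp: dvd_def)
    have Deq: "D = f * Q^m * d1 + Q * Q^m * r1" using r1 unfolding D_def dd by (simp add: algebra_simps)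
    have Dleq: "Dl = e * T + Q * T * r2" using r2 unfolding Dl_def by (simp add: algebra_simps)
    have key: "D * Dl - Q^m * T * (f * d1 * e) = NN * (f * d1 * r2 + r1 * e + r1 * Q * r2)"
      unfolding Deq Dleq NNT by (simp add: algebra_simps)
    have "H (k + T) - (H k - 2 * (Q^m * T) * W)
        = (E (x + Dl) - E (x + Dl + D)) - (E x - E (x + D)) - (E (P (k+d+T)) - E (x + Dl + D))
          + 2 * (Q^m * T) * W"
      unfolding hT hk by simp
    also have "\<dots> = - 2 * u * (D * Dl - Q^m * T * (f * d1 * e)) - (E (P (k+d+T)) - E (x + Dl + D))"
      unfolding Ediff[of "x + Dl" D] Ediff[of x D] W_def by (simp add: algebra_simps)
    also have "\<dots> = 2 * NN * (- u * (f * d1 * r2 + r1 * e + r1 * Q * r2)) - (E (P (k+d+T)) - E (x + Dl + D))"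
      unfolding key by (simp add: algebra_simps)
    finally show ?thesis using e1 by (metis dvd_diff dvd_triv_left)
  qed
  define S where "S k = cis (- pi * real_of_int (H k) / real N)" for k
  define \<omega> where "\<omega> = cis (2 * pi * real_of_int W / real q)"
  have realN: "real N = real q * real_of_int (Q^m * T)"
  proof -
    have "real_of_int NN = real_of_int (Q * (Q^m * T))" unfolding NNT by (simp add: mult.assoc)
    thus ?thesis unfolding NN_def Q_def by simp
  qed
  have qpos: "real q > 0" using q2 by simp
  have Sshift: "S (k + T) = S k * \<omega>" for k
  proof -
    have "S (k + T) = cis (- pi * real_of_int (H k - 2 * (Q^m * T) * W) / real N)"
      unfolding S_def by (rule cis_cong[OF assms(1)]) (use Hshift[of k] NN_def in simp)
    also have "- pi * real_of_int (H k - 2 * (Q^m * T) * W) / real N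
        = - pi * real_of_int (H k) / real N + 2 * pi * real_of_int W / real q"
    proof -
      have "real_of_int (Q^m * T) \<noteq> 0"
      proof
        assume h: "real_of_int (Q^m * T) = 0"
        have "real N = 0" using realN by (simp only: h mult_zero_right)
        thus False using assms(1) by simp
      qed
      thus ?thesis unfolding realN using qpos by (simp add: field_simps)
    qed
    finally show ?thesis unfolding S_def \<omega>_def by (simp add: cis_mult)
  qed
  have Smod: "S k = S (k mod NN)" for k
  proof -
    have h0: "NN dvd k - k mod NN" by (simp add: mod_eq_dvd_iff[symmetric])
    have h1: "NN dvd (k + d) - (k mod NN + d)" using h0 by simp
    have hh: "2 * NN dvd H k - H (k mod NN)"
    proof -
      have a1: "2 * NN dvd E (P k) - E (P (k mod NN))"
        using Econg poly_cong[OF h0] unfolding P_def by blast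
      have a2: "2 * NN dvd E (P (k + d)) - E (P (k mod NN + d))"
        using Econg poly_cong[OF h1] unfolding P_def by blast
      have "H k - H (k mod NN) = (E (P k) - E (P (k mod NN))) - (E (P (k + d)) - E (P (k mod NN + d)))"
        unfolding H_def by simp
      thus ?thesis using dvd_diff[OF a1 a2] by simp
    qed
    show ?thesis unfolding S_def by (rule cis_cong[OF assms(1)]) (use hh NN_def in simp)
  qed
  have modd: "NN dvd x mod NN - x" for x by (metis mod_mod_trivial mod_eq_dvd_iff)
  have zcE: "zc N u l x = cis (- pi * real_of_int (E x) / real N)" for x
    unfolding zc_def E_def by simp
  have summand: "zc N u l ((k ^ q + a * k + b) mod int N) *
      cnj (zc N u l ((((k + d) mod int N) ^ q + a * ((k + d) mod int N) + b) mod int N)) = S k" for k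
  proof -
    have m1: "NN dvd P k mod NN - P k" by (rule modd)
    have c1: "zc N u l (P k mod NN) = cis (- pi * real_of_int (E (P k)) / real N)"
      unfolding zcE by (rule cis_cong[OF assms(1)]) (use Econg[OF m1] NN_def in simp)
    have "NN dvd (k + d) mod NN - (k + d)" by (rule modd)
    hence "NN dvd P ((k + d) mod NN) - P (k + d)" using poly_cong unfolding P_def by blast
    moreover have "NN dvd P ((k + d) mod NN) mod NN - P ((k + d) mod NN)" by (rule modd)
    ultimately have m2: "NN dvd P ((k + d) mod NN) mod NN - P (k + d)"
      by (metis diff_add_cancel dvd_add add_diff_eq)
    have c2: "zc N u l (P ((k + d) mod NN) mod NN) = cis (- pi * real_of_int (E (P (k + d))) / real N)"
      unfolding zcE by (rule cis_cong[OF assms(1)]) (use Econg[OF m2] NN_def in simp)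
    have "zc N u l (P k mod NN) * cnj (zc N u l (P ((k + d) mod NN) mod NN)) = S k"
      unfolding c1 c2 S_def H_def cis_cnj cis_mult by (simp add: diff_divide_distrib algebra_simps)
    thus ?thesis unfolding P_def NN_def by simp
  qed
  have th: "autocorr N (\<lambda>k. zc N u l ((k ^ q + a * k + b) mod int N)) d = (\<Sum>k\<in>{0..<NN}. S k)"
    unfolding autocorr_def NN_def using summand by simp
  have bijT: "bij_betw (\<lambda>k. (k + T) mod NN) {0..<NN} {0..<NN}"
    by (rule bij_betw_byWitness[where f' = "\<lambda>k. (k - T) mod NN"])
       (auto simp: mod_simps NNpos)
  have "(\<Sum>k\<in>{0..<NN}. S k) = (\<Sum>k\<in>{0..<NN}. S ((k + T) mod NN))"
    using sum.reindex_bij_betw[OF bijT, of S] by simp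
  also have "\<dots> = (\<Sum>k\<in>{0..<NN}. S k * \<omega>)"
    by (rule sum.cong) (auto simp: Smod[symmetric] Sshift)
  also have "\<dots> = (\<Sum>k\<in>{0..<NN}. S k) * \<omega>" by (simp add: sum_distrib_right)
  finally have fixeq: "(\<Sum>k\<in>{0..<NN}. S k) * (1 - \<omega>) = 0" by (simp add: algebra_simps)
  have notQW: "\<not> Q dvd W"
  proof -
    have nu': "\<not> Q dvd u"
    proof
      assume "Q dvd u"
      hence "is_unit Q" using coprime_common_divisor[OF assms(4)] QNN NN_def by blast
      thus False using Qnu by simp
    qed
    have nf: "\<not> Q dvd f"
    proof (cases "m = 0")
      case True then show ?thesis using F4a f_def by simp
    next
      case False then show ?thesis using F4b mn f_def by simp
    qed
    have ne: "\<not> Q dvd e"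
    proof (cases "n - m = 1")
      case True then show ?thesis using F4a e_def by (simp add: add.commute)
    next
      case False then show ?thesis using F4b mn e_def by simp
    qed
    show ?thesis unfolding W_def using nu' nf ne Qd1 primeQ by (simp add: prime_dvd_mult_iff)
  qed
  have "\<omega> \<noteq> 1"
  proof
    assume "\<omega> = 1"
    hence "cos (2 * pi * real_of_int W / real q) = 1" unfolding \<omega>_def by (metis cis.sel(1) one_complex.sel(1))
    then obtain z :: int where z: "2 * pi * real_of_int W / real q = real_of_int z * 2 * pi"
      using cos_one_2pi_int by blast
    hence "real_of_int W = real_of_int z * real q" using qpos by (simp add: field_simps)
    hence "W = z * Q" unfolding Q_def by (metis of_int_eq_iff of_int_mult of_int_of_nat_eq)
    thus False using notQW by simp
  qed
  with fixeq th show ?thesis by simp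
qed

end
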